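(* Let $\mathcal A$ be a group and $\mathcal H$ any subgroup. Then there exists a generating system $X$ of $\mathcal A$ of size $d(\mathcal A)$ such that the Schreier graph $\mathrm{Sch}(\mathcal A,\mathcal H,X)$ is vertex-transitive.
   Context: $d(\mathcal A)$ is the number of elements of order $2$ of $\mathcal A$ plus half the number of elements of order at least $3$. A generating system is a multiset of elements generating $\mathcal A$. The Schreier graph $\mathrm{Sch}(\mathcal A,\mathcal H,X)$ has vertices the right cosets $\mathcal Hg$ and, for each coset and each $x$ with $x\in X$ or $x^{-1}\in X$, an edge labeled $x$ from $\mathcal Hg$ to $\mathcal Hgx$ whose inverse is the edge labeled $x^{-1}$ from $\mathcal Hgx$ (loops and multiple edges allowed). Vertex-transitive means transitive on vertices under graph automorphisms (not necessarily label-preserving). *)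

theory Defs
  imports "HOL-Algebra.Algebra" "HOL-Library.Multiset"
begin

definition d_inv :: "('a, 'b) monoid_scheme \<Rightarrow> real" where
  "d_inv G = real (card {x \<in> carrier G. group.ord G x = 2})
             + real (card {x \<in> carrier G. group.ord G x \<ge> 3}) / 2"

definition generating_system :: "('a, 'b) monoid_scheme \<Rightarrow> 'a multiset \<Rightarrow> bool" where
  "generating_system G S \<longleftrightarrow> set_mset S \<subseteq> carrier G \<and> generate G (set_mset S) = carrier G"

text \<open>Graphs with loops and multiple edges, given by a vertex set V, a set of
  (directed) darts D, a source map and a involution rv
  (the inverse edge); the target of a dart d is src (rv d).\<close>
definition graph_aut ::
  "'v set \<Rightarrow> 'e set \<Rightarrow> ('e \<Rightarrow> 'v) \<Rightarrow> ('e \<Rightarrow> 'e) \<Rightarrow> ('v \<Rightarrow> 'v) \<Rightarrow> ('e \<Rightarrow> 'e) \<Rightarrow> bool" where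
  "graph_aut V D src rv \<phi> \<psi> \<longleftrightarrow>
     bij_betw \<phi> V V \<and> bij_betw \<psi> D D \<and>
     (\<forall>e\<in>D. src (\<psi> e) = \<phi> (src e)) \<and> (\<forall>e\<in>D. rv (\<psi> e) = \<psi> (rv e))"

definition vertex_transitive ::
  "'v set \<Rightarrow> 'e set \<Rightarrow> ('e \<Rightarrow> 'v) \<Rightarrow> ('e \<Rightarrow> 'e) \<Rightarrow> bool" where
  "vertex_transitive V D src rv \<longleftrightarrow>
     (\<forall>u\<in>V. \<forall>v\<in>V. \<exists>\<phi> \<psi>. graph_aut V D src rv \<phi> \<psi> \<and> \<phi> u = v)"

text \<open>Darts: (C, x, k, b) where C is a coset, x occurs in S and k < count S x indexes the
  occurrence. If x = x^{-1} there is one dart per occurrence and vertex (b = True,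
  labelled x); otherwise two: b = True labelled x (from C to Cx) and
  b = False labelled x^{-1} (from C to Cx^{-1}). rv gives the inverse edge.\<close>
definition sch_vertices :: "('a, 'b) monoid_scheme \<Rightarrow> 'a set \<Rightarrow> 'a set set" where
  "sch_vertices G H = rcosets\<^bsub>G\<^esub> H"

definition sch_darts ::
  "('a, 'b) monoid_scheme \<Rightarrow> 'a set \<Rightarrow> 'a multiset \<Rightarrow> ('a set \<times> 'a \<times> nat \<times> bool) set" where
  "sch_darts G H S = {(C, x, k, b). C \<in> rcosets\<^bsub>G\<^esub> H \<and> x \<in># S \<and> k < count S x \<and>
                                     (x = inv\<^bsub>G\<^esub> x \<longrightarrow> b)}"

definition sch_src :: "('a set \<times> 'a \<times> nat \<times> bool) \<Rightarrow> 'a set" where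
  "sch_src e = fst e"

definition sch_rev ::
  "('a, 'b) monoid_scheme \<Rightarrow> ('a set \<times> 'a \<times> nat \<times> bool) \<Rightarrow> ('a set \<times> 'a \<times> nat \<times> bool)" where
  "sch_rev G e = (case e of (C, x, k, b) \<Rightarrow>
      if x = inv\<^bsub>G\<^esub> x then (C #>\<^bsub>G\<^esub> x, x, k, True)
      else if b then (C #>\<^bsub>G\<^esub> x, x, k, False)
      else (C #>\<^bsub>G\<^esub> inv\<^bsub>G\<^esub> x, x, k, True))"

definition schreier_vertex_transitive ::
  "('a, 'b) monoid_scheme \<Rightarrow> 'a set \<Rightarrow> 'a multiset \<Rightarrow> bool" where
  "schreier_vertex_transitive G H S \<longleftrightarrow>
     vertex_transitive (sch_vertices G H) (sch_darts G H S) sch_src (sch_rev G)"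

end

theory Submission
  imports Defs
begin

context group
begin

lemma exR: "\<exists>R. R \<subseteq> carrier G - {\<one>} \<and> (\<forall>y \<in> carrier G - {\<one>}. y \<in> R \<or> inv y \<in> R)
   \<and> (\<forall>y\<in>R. inv y \<in> R \<longrightarrow> y = inv y)"
proof -
  define P where "P = (\<lambda>y. {y, inv y}) ` (carrier G - {\<one>})"
  define f where "f = (\<lambda>p::'a set. SOME y. y \<in> p)"
  define R where "R = f ` P"
  have fp: "f {y, inv y} \<in> {y, inv y}" for y
    unfolding f_def by (rule someI[of _ y]) simp
  have Rsub: "R \<subseteq> carrier G - {\<one>}"
  proof
    fix z assume "z \<in> R"
    then obtain y where y: "y \<in> carrier G - {\<one>}" "z = f {y, inv y}" unfolding R_def P_def by auto
    then have zz: "z = y \<or> z = inv y" using fp[of y] by blast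
    have c1: "y \<in> carrier G" "y \<noteq> \<one>" using y by blast+
    have c2: "inv y \<in> carrier G" using c1(1) by (rule inv_closed)
    have c3: "inv y \<noteq> \<one>" using c1 inv_eq_1_iff by metis
    show "z \<in> carrier G - {\<one>}" using zz c1 c2 c3 by (elim disjE) simp_all
  qed
  moreover have "\<forall>y \<in> carrier G - {\<one>}. y \<in> R \<or> inv y \<in> R"
  proof
    fix y assume y: "y \<in> carrier G - {\<one>}"
    then have "f {y, inv y} \<in> R" unfolding R_def P_def by auto
    then show "y \<in> R \<or> inv y \<in> R" using fp[of y] by auto
  qed
  moreover have "\<forall>y\<in>R. inv y \<in> R \<longrightarrow> y = inv y"
  proof (intro ballI impI)
    fix y assume yR: "y \<in> R" and iR: "inv y \<in> R"
    obtain a where a: "a \<in> carrier G - {\<one>}" "y = f {a, inv a}" using yR unfolding R_def P_def by auto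
    obtain b where b: "b \<in> carrier G - {\<one>}" "inv y = f {b, inv b}" using iR unfolding R_def P_def by auto
    have yc: "y \<in> carrier G" using Rsub yR by blast
    have ya: "y = a \<or> y = inv a" using fp[of a] a by auto
    have yb: "inv y = b \<or> inv y = inv b" using fp[of b] b by auto
    have ac: "a \<in> carrier G" using a(1) by simp
    have bc: "b \<in> carrier G" using b(1) by simp
    have eqa: "{a, inv a} = {y, inv y}"
    proof (cases "y = a")
      case True then show ?thesis by simp
    next
      case False then have "y = inv a" using ya by simp
      then have "inv y = a" using ac by simp
      then show ?thesis using \<open>y = inv a\<close> by (simp add: insert_commute)
    qed
    have eqb: "{b, inv b} = {y, inv y}"
    proof (cases "inv y = b")
      case True then have "inv b = y" using bc
        by (metis inv_inv yc)
      then show ?thesis using True by (simp add: insert_commute)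
    next
      case False then have "inv y = inv b" using yb by simp
      then have "y = b" using bc yc by (metis inv_inv)
      then show ?thesis by simp
    qed
    have a': "y = f {y, inv y}" using a(2) unfolding eqa .
    have b': "inv y = f {y, inv y}" using b(2) unfolding eqb .
    from b' a'[symmetric] have "inv y = y" by (rule trans)
    then show "y = inv y" by (rule sym)
  qed
  ultimately show ?thesis by blast
qed

lemma ord2_iff: assumes "finite (carrier G)" "x \<in> carrier G"
  shows "ord x = 2 \<longleftrightarrow> x \<noteq> \<one> \<and> inv x = x"
proof -
  have "x [^] (2::nat) = x \<otimes> x" using assms by (simp add: numeral_2_eq_2)
  have "(inv x = x) \<longleftrightarrow> x \<otimes> x = \<one>" using assms
    by (metis inv_equality r_inv)
  also have "\<dots> \<longleftrightarrow> ord x dvd 2" using pow_eq_id[OF assms(2), of 2] assms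
    by (simp add: numeral_2_eq_2)
  finally have 1: "(inv x = x) \<longleftrightarrow> ord x dvd 2" .
  have "ord x \<ge> 1" using ord_ge_1 assms by auto
  have "ord x dvd 2 \<longleftrightarrow> ord x = 1 \<or> ord x = 2"
  proof (rule iffI)
    assume "ord x dvd 2"
    then have "ord x \<le> 2" using dvd_imp_le by auto
    then show "ord x = 1 \<or> ord x = 2" using \<open>ord x \<ge> 1\<close> by linarith
  qed auto
  then show ?thesis using 1 ord_eq_1[OF assms(2)] by auto
qed

lemma ord3_iff: assumes "finite (carrier G)" "x \<in> carrier G"
  shows "ord x \<ge> 3 \<longleftrightarrow> x \<noteq> \<one> \<and> inv x \<noteq> x"
proof -
  have "ord x \<ge> 1" using ord_ge_1 assms by auto
  then show ?thesis using ord2_iff[OF assms] ord_eq_1[OF assms(2)] by auto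
qed

lemma card_R:
  assumes fin: "finite (carrier G)"
    and R1: "R \<subseteq> carrier G - {\<one>}"
    and R2: "\<forall>y \<in> carrier G - {\<one>}. y \<in> R \<or> inv y \<in> R"
    and R3: "\<forall>y\<in>R. inv y \<in> R \<longrightarrow> y = inv y"
  shows "real (card R) = d_inv G"
proof -
  define I where "I = {x \<in> carrier G. x \<noteq> \<one> \<and> inv x = x}"
  define N where "N = {x \<in> carrier G. x \<noteq> \<one> \<and> inv x \<noteq> x}"
  have dI: "{x \<in> carrier G. ord x = 2} = I" unfolding I_def using ord2_iff[OF fin] by blast
  have dN: "{x \<in> carrier G. ord x \<ge> 3} = N" unfolding N_def using ord3_iff[OF fin] by blast
  have d: "d_inv G = real (card I) + real (card N) / 2"
    unfolding d_inv_def dI dN ..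
  have finR: "finite R" using R1 fin finite_subset by blast
  have finI: "finite I" unfolding I_def using fin by simp
  have finN: "finite N" unfolding N_def using fin by simp
  have Rsplit: "R = I \<union> (R \<inter> N)"
  proof
    show "R \<subseteq> I \<union> (R \<inter> N)" using R1 unfolding I_def N_def by blast
    show "I \<union> (R \<inter> N) \<subseteq> R"
    proof
      fix x assume "x \<in> I \<union> (R \<inter> N)"
      then show "x \<in> R"
      proof
        assume xI: "x \<in> I"
        then have "x \<in> carrier G - {\<one>}" unfolding I_def by simp
        then have "x \<in> R \<or> inv x \<in> R" using R2 by blast
        then show "x \<in> R" using xI unfolding I_def by auto
      qed simp
    qed
  qed
  have c1: "card R = card I + card (R \<inter> N)"
    using Rsplit finI finR card_Un_disjoint[of I "R \<inter> N"] unfolding I_def N_def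
    by (metis (no_types, lifting) Int_iff disjoint_iff finite_Int mem_Collect_eq)
  have injinv: "inj_on (\<lambda>x. inv x) (R \<inter> N)"
    by (rule inj_on_inverseI[of _ "\<lambda>x. inv x"]) (use R1 in auto)
  have Nsplit: "N = (R \<inter> N) \<union> (\<lambda>x. inv x) ` (R \<inter> N)"
  proof
    show "N \<subseteq> (R \<inter> N) \<union> (\<lambda>x. inv x) ` (R \<inter> N)"
    proof
      fix x assume xN: "x \<in> N"
      then have xc: "x \<in> carrier G" "x \<noteq> \<one>" "inv x \<noteq> x" unfolding N_def by auto
      then have "x \<in> R \<or> inv x \<in> R" using R2 by simp
      moreover have "inv x \<in> N" using xc unfolding N_def by simp
      moreover have "x = inv (inv x)" using xc by simp
      ultimately show "x \<in> (R \<inter> N) \<union> (\<lambda>x. inv x) ` (R \<inter> N)" using xN by blast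
    qed
    show "(R \<inter> N) \<union> (\<lambda>x. inv x) ` (R \<inter> N) \<subseteq> N"
    proof
      fix x assume "x \<in> (R \<inter> N) \<union> (\<lambda>x. inv x) ` (R \<inter> N)"
      then show "x \<in> N"
      proof
        assume "x \<in> (\<lambda>x. inv x) ` (R \<inter> N)"
        then obtain z where z: "z \<in> N" "x = inv z" by blast
        then have "z \<in> carrier G" "z \<noteq> \<one>" "inv z \<noteq> z" unfolding N_def by auto
        then show "x \<in> N" using z(2) unfolding N_def by auto
      qed simp
    qed
  qed
  have disj: "(R \<inter> N) \<inter> (\<lambda>x. inv x) ` (R \<inter> N) = {}"
  proof (rule ccontr)
    assume "(R \<inter> N) \<inter> (\<lambda>x. inv x) ` (R \<inter> N) \<noteq> {}"
    then obtain z where z: "z \<in> R" "z \<in> N" "inv z \<in> R" by auto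
    then have "z = inv z" using R3 by blast
    then show False using z(2) unfolding N_def by auto
  qed
  have c2: "card N = 2 * card (R \<inter> N)"
  proof -
    have "card N = card (R \<inter> N) + card ((\<lambda>x. inv x) ` (R \<inter> N))"
      using Nsplit disj card_Un_disjoint finR by (metis finite_Int finite_imageI)
    also have "card ((\<lambda>x. inv x) ` (R \<inter> N)) = card (R \<inter> N)"
      using card_image[OF injinv] .
    finally show ?thesis by simp
  qed
  show ?thesis unfolding d using c1 c2 by simp
qed

lemma canc1: "c \<in> carrier G \<Longrightarrow> y \<in> carrier G \<Longrightarrow> c \<otimes> (inv c \<otimes> y) = y"
  by (simp add: m_assoc[symmetric])

lemma conj_simps:
  assumes "c \<in> carrier G" "y \<in> carrier G"
  shows "c \<otimes> (inv c \<otimes> y \<otimes> c) = y \<otimes> c"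
    and "inv (inv c) \<otimes> (inv c \<otimes> y \<otimes> c) \<otimes> inv c = y"
    and "inv (inv c \<otimes> y \<otimes> c) = inv c \<otimes> inv y \<otimes> c"
  using assms by (simp_all add: m_assoc canc1 inv_mult_group)

lemma conj_ne:
  assumes "c \<in> carrier G" "y \<in> carrier G" "y \<noteq> \<one>"
  shows "inv c \<otimes> y \<otimes> c \<in> carrier G" "inv c \<otimes> y \<otimes> c \<noteq> \<one>"
proof -
  show "inv c \<otimes> y \<otimes> c \<in> carrier G" using assms by simp
  show "inv c \<otimes> y \<otimes> c \<noteq> \<one>"
  proof
    assume "inv c \<otimes> y \<otimes> c = \<one>"
    then have "c \<otimes> (inv c \<otimes> y \<otimes> c) \<otimes> inv c = c \<otimes> \<one> \<otimes> inv c" by simp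
    then have "y = \<one>" using assms by (simp add: m_assoc canc1)
    then show False using assms by simp
  qed
qed

lemma gen_R:
  assumes R1: "R \<subseteq> carrier G - {\<one>}"
    and R2: "\<forall>y \<in> carrier G - {\<one>}. y \<in> R \<or> inv y \<in> R"
  shows "generate G R = carrier G"
proof
  have "R \<subseteq> carrier G" using R1 by blast
  then show "generate G R \<subseteq> carrier G" by (rule generate_incl)
  show "carrier G \<subseteq> generate G R"
  proof
    fix x assume xc: "x \<in> carrier G"
    show "x \<in> generate G R"
    proof (cases "x = \<one>")
      case True then show ?thesis using generate.one by simp
    next
      case False
      then have "x \<in> carrier G - {\<one>}" using xc by simp
      then have "x \<in> R \<or> inv x \<in> R" using R2 by blast
      then show ?thesis
      proof
        assume "x \<in> R" then show ?thesis by (rule generate.incl)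
      next
        assume "inv x \<in> R"
        then have "inv (inv x) \<in> generate G R" by (rule generate.inv)
        then show ?thesis using xc by simp
      qed
    qed
  qed
qed

lemma vt:
  assumes sg: "subgroup H G" and finR: "finite R"
    and R1: "R \<subseteq> carrier G - {\<one>}"
    and R2: "\<forall>y \<in> carrier G - {\<one>}. y \<in> R \<or> inv y \<in> R"
    and R3: "\<forall>y\<in>R. inv y \<in> R \<longrightarrow> y = inv y"
  shows "schreier_vertex_transitive G H (mset_set R)"
proof -
  have Hs: "H \<subseteq> carrier G" using sg by (rule subgroup.subset)
  define D where "D = sch_darts G H (mset_set R)"
  have memD: "(C,x,k,b) \<in> D \<longleftrightarrow> C \<in> rcosets H \<and> x \<in> R \<and> k = 0 \<and> (x = inv x \<longrightarrow> b)" for C x k b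
    unfolding D_def sch_darts_def using finR by (auto simp: count_mset_set)
  have rcC: "C \<subseteq> carrier G" if "C \<in> rcosets H" for C
    using that Hs r_coset_subset_G unfolding RCOSETS_def by auto
  have rcM: "C #> c \<in> rcosets H" if hC: "C \<in> rcosets H" and hc: "c \<in> carrier G" for C c
  proof -
    obtain a where a: "a \<in> carrier G" "C = H #> a" using hC unfolding RCOSETS_def by auto
    then have "C #> c = H #> (a \<otimes> c)" using coset_mult_assoc[OF Hs] hc by simp
    moreover have "a \<otimes> c \<in> carrier G" using a hc by simp
    ultimately show ?thesis unfolding RCOSETS_def by auto
  qed
  have Rc: "x \<in> carrier G" "x \<noteq> \<one>" if "x \<in> R" for x using R1 that by auto
  define lab where "lab = (\<lambda>e::'a set \<times> 'a \<times> nat \<times> bool. if snd (snd (snd e)) then fst (snd e) else inv (fst (snd e)))"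
  define enc where "enc = (\<lambda>(C::'a set) y. if y \<in> R then (C, y, 0::nat, True) else (C, inv y, 0::nat, False))"
  have F1: "fst e \<in> rcosets H \<and> lab e \<in> carrier G \<and> lab e \<noteq> \<one>" if "e \<in> D" for e
  proof -
    obtain C x k b where e: "e = (C,x,k,b)" by (cases e) blast
    then have m: "C \<in> rcosets H" "x \<in> R" using that memD by auto
    show ?thesis using m Rc[OF m(2)] unfolding e lab_def by auto
  qed
  have F2: "enc (fst e) (lab e) = e" if "e \<in> D" for e
  proof -
    obtain C x k b where e: "e = (C,x,k,b)" by (cases e) blast
    then have m: "C \<in> rcosets H" "x \<in> R" "k = 0" "x = inv x \<longrightarrow> b" using that memD by auto
    show ?thesis
    proof (cases b)
      case True then show ?thesis using m unfolding e lab_def enc_def by simp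
    next
      case False
      then have "x \<noteq> inv x" using m by blast
      then have "inv x \<notin> R" using R3 m(2) by blast
      then show ?thesis using m False Rc[OF m(2)] unfolding e lab_def enc_def by simp
    qed
  qed
  have F3: "enc C y \<in> D \<and> fst (enc C y) = C \<and> lab (enc C y) = y"
    if "C \<in> rcosets H" "y \<in> carrier G" "y \<noteq> \<one>" for C y
  proof (cases "y \<in> R")
    case True then show ?thesis using that memD unfolding enc_def lab_def by auto
  next
    case False
    then have iR: "inv y \<in> R" using R2 that by auto
    have "inv y \<noteq> inv (inv y)"
    proof
      assume "inv y = inv (inv y)"
      then have "inv y = y" using that by simp
      then show False using iR False by simp
    qed
    then show ?thesis using that memD iR False unfolding enc_def lab_def by auto
  qed
  have F4: "sch_rev G e = enc (fst e #> lab e) (inv (lab e))" if "e \<in> D" for e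
  proof -
    obtain C x k b where e: "e = (C,x,k,b)" by (cases e) blast
    then have m: "C \<in> rcosets H" "x \<in> R" "k = 0" "x = inv x \<longrightarrow> b" using that memD by auto
    have xc: "x \<in> carrier G" using Rc[OF m(2)] by simp
    show ?thesis
    proof (cases "x = inv x")
      case True
      then have "inv x \<in> R" using m by simp
      then show ?thesis using True m unfolding e lab_def enc_def sch_rev_def by simp
    next
      case nI: False
      then have niR: "inv x \<notin> R" using R3 m(2) by blast
      show ?thesis
      proof (cases b)
        case True then show ?thesis using nI niR m xc unfolding e lab_def enc_def sch_rev_def by simp
      next
        case False then show ?thesis using nI niR m xc unfolding e lab_def enc_def sch_rev_def by simp
      qed
    qed
  qed
  define \<psi> where "\<psi> = (\<lambda>c e. enc (fst e #> c) (inv c \<otimes> lab e \<otimes> c))"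
  have \<psi>_app: "\<psi> c e = enc (fst e #> c) (inv c \<otimes> lab e \<otimes> c)" for c e
    unfolding \<psi>_def ..
  have \<psi>D: "\<psi> c e \<in> D \<and> fst (\<psi> c e) = fst e #> c \<and> lab (\<psi> c e) = inv c \<otimes> lab e \<otimes> c"
    if "e \<in> D" "c \<in> carrier G" for e c
  proof -
    have f: "fst e \<in> rcosets H" "lab e \<in> carrier G" "lab e \<noteq> \<one>" using F1[OF that(1)] by auto
    show ?thesis unfolding \<psi>_def
      using F3[OF rcM[OF f(1) that(2)] conj_ne[OF that(2) f(2,3)]] by simp
  qed
  have \<psi>inv: "\<psi> (inv c) (\<psi> c e) = e" if "e \<in> D" "c \<in> carrier G" for e c
  proof -
    have f: "fst e \<in> rcosets H" "lab e \<in> carrier G" "lab e \<noteq> \<one>" using F1[OF that(1)] by auto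
    have p: "fst (\<psi> c e) = fst e #> c" "lab (\<psi> c e) = inv c \<otimes> lab e \<otimes> c" using \<psi>D[OF that] by auto
    have "\<psi> (inv c) (\<psi> c e) = enc ((fst e #> c) #> inv c) (inv (inv c) \<otimes> (inv c \<otimes> lab e \<otimes> c) \<otimes> inv c)"
      using \<psi>_app[of "inv c" "\<psi> c e"] p by simp
    also have "(fst e #> c) #> inv c = fst e"
      using coset_mult_assoc[OF rcC[OF f(1)] that(2)] that(2) rcC[OF f(1)] by simp
    also have "inv (inv c) \<otimes> (inv c \<otimes> lab e \<otimes> c) \<otimes> inv c = lab e"
      using conj_simps(2)[OF that(2) f(2)] .
    finally show ?thesis using F2[OF that(1)] by simp
  qed
  have aut: "graph_aut (sch_vertices G H) D sch_src (sch_rev G) (\<lambda>C. C #> c) (\<psi> c)"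
    if c: "c \<in> carrier G" for c
  proof -
    have ic: "inv c \<in> carrier G" using c by simp
    have b1: "bij_betw (\<lambda>C. C #> c) (rcosets H) (rcosets H)"
    proof (rule bij_betw_byWitness[where f' = "\<lambda>C. C #> inv c"])
      show "\<forall>a\<in>rcosets H. a #> c #> inv c = a"
        using coset_mult_assoc[OF rcC c ic] rcC c by simp
      show "\<forall>a\<in>rcosets H. a #> inv c #> c = a"
        using coset_mult_assoc[OF rcC ic c] rcC c by simp
      show "(\<lambda>C. C #> c) ` (rcosets H) \<subseteq> rcosets H" using rcM c by auto
      show "(\<lambda>C. C #> inv c) ` (rcosets H) \<subseteq> rcosets H" using rcM ic by auto
    qed
    have b2: "bij_betw (\<psi> c) D D"
    proof (rule bij_betw_byWitness[where f' = "\<psi> (inv c)"])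
      show "\<forall>a\<in>D. \<psi> (inv c) (\<psi> c a) = a" using \<psi>inv c by blast
      show "\<forall>a\<in>D. \<psi> c (\<psi> (inv c) a) = a" using \<psi>inv[OF _ ic] c by simp
      show "\<psi> c ` D \<subseteq> D" using \<psi>D c by blast
      show "\<psi> (inv c) ` D \<subseteq> D" using \<psi>D ic by blast
    qed
    have src: "\<forall>e\<in>D. sch_src (\<psi> c e) = fst e #> c" using \<psi>D c unfolding sch_src_def by blast
    have rv: "sch_rev G (\<psi> c e) = \<psi> c (sch_rev G e)" if e: "e \<in> D" for e
    proof -
      have f: "fst e \<in> rcosets H" "lab e \<in> carrier G" "lab e \<noteq> \<one>" using F1[OF e] by auto
      define y where "y = lab e"
      have yc: "y \<in> carrier G" "y \<noteq> \<one>" using f y_def by auto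
      have p: "\<psi> c e \<in> D" "fst (\<psi> c e) = fst e #> c" "lab (\<psi> c e) = inv c \<otimes> y \<otimes> c"
        using \<psi>D[OF e c] y_def by auto
      have "sch_rev G (\<psi> c e) = enc ((fst e #> c) #> (inv c \<otimes> y \<otimes> c)) (inv (inv c \<otimes> y \<otimes> c))"
        using F4[OF p(1)] p(2,3) by simp
      also have "(fst e #> c) #> (inv c \<otimes> y \<otimes> c) = (fst e #> y) #> c"
        using coset_mult_assoc[OF rcC[OF f(1)]] c yc conj_simps(1)[OF c yc(1)] by simp
      also have "inv (inv c \<otimes> y \<otimes> c) = inv c \<otimes> inv y \<otimes> c" using conj_simps(3)[OF c yc(1)] .
      finally have l: "sch_rev G (\<psi> c e) = enc ((fst e #> y) #> c) (inv c \<otimes> inv y \<otimes> c)" .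
      have r1: "sch_rev G e = enc (fst e #> y) (inv y)" using F4[OF e] y_def by simp
      have yi: "inv y \<in> carrier G" "inv y \<noteq> \<one>" using yc by auto
      have r2: "sch_rev G e \<in> D" "fst (sch_rev G e) = fst e #> y" "lab (sch_rev G e) = inv y"
        using F3[OF rcM[OF f(1) yc(1)] yi] r1 by auto
      have "\<psi> c (sch_rev G e) = enc ((fst e #> y) #> c) (inv c \<otimes> inv y \<otimes> c)"
        unfolding \<psi>_def r2(2,3) ..
      then show ?thesis using l by simp
    qed
    show ?thesis unfolding graph_aut_def sch_vertices_def
      using b1 b2 src rv unfolding sch_src_def by auto
  qed
  show ?thesis
    unfolding schreier_vertex_transitive_def vertex_transitive_def D_def[symmetric]
  proof (intro ballI)
    fix u v assume u: "u \<in> sch_vertices G H" and v: "v \<in> sch_vertices G H"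
    obtain g where g: "g \<in> carrier G" "u = H #> g" using u unfolding sch_vertices_def RCOSETS_def by auto
    obtain g' where g': "g' \<in> carrier G" "v = H #> g'" using v unfolding sch_vertices_def RCOSETS_def by auto
    define c where "c = inv g \<otimes> g'"
    have c: "c \<in> carrier G" using g g' c_def by simp
    have "u #> c = H #> (g \<otimes> c)" using coset_mult_assoc[OF Hs g(1) c] g by simp
    also have "g \<otimes> c = g'" unfolding c_def using g g' by (simp add: canc1)
    finally have "u #> c = v" using g' by simp
    then show "\<exists>\<phi> \<psi>. graph_aut (sch_vertices G H) D sch_src (sch_rev G) \<phi> \<psi> \<and> \<phi> u = v"
      using aut[OF c] by blast
  qed
qed

end


theorem proposition6p1:
  fixes G :: "('a, 'b) monoid_scheme" and H :: "'a set"
  assumes "group G" and "finite (carrier G)" and "subgroup H G"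
  shows "\<exists>S. generating_system G S \<and> real (size S) = d_inv G \<and>
             schreier_vertex_transitive G H S"
proof -
  interpret group G by (rule assms(1))
  obtain R where R1: "R \<subseteq> carrier G - {\<one>\<^bsub>G\<^esub>}"
    and R2: "\<forall>y \<in> carrier G - {\<one>\<^bsub>G\<^esub>}. y \<in> R \<or> inv\<^bsub>G\<^esub> y \<in> R"
    and R3: "\<forall>y\<in>R. inv\<^bsub>G\<^esub> y \<in> R \<longrightarrow> y = inv\<^bsub>G\<^esub> y"
    using exR by blast
  have finR: "finite R" using R1 assms(2) finite_subset by blast
  have "generating_system G (mset_set R)"
    unfolding generating_system_def using finR R1 gen_R[OF R1 R2] by auto
  moreover have "real (size (mset_set R)) = d_inv G"
    using card_R[OF assms(2) R1 R2 R3] by simp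
  moreover have "schreier_vertex_transitive G H (mset_set R)"
    by (rule vt[OF assms(3) finR R1 R2 R3])
  ultimately show ?thesis by blast
qed

end
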